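(* Let $G_{K,N}$ be the graph with vertex set $\{u_{ij},b_{ij}: i\in[K], j\in[N]\}$ whose edges are exactly: $u_{ij}\sim u_{ik}$ for $j\ne k$; $b_{ij}\sim u_{ik}$ for all $j,k\in[N]$; and for each $i\in[N]$ and $j\ne k$ in $[K]$: $u_{ji}\sim u_{ki}$, $b_{ji}\sim b_{ki}$, $b_{ji}\sim u_{ki}$. For $j\in[N]$ let $U^o_j=\{u_{ij}: i\in[K]\}$ and $B^o_j=\{b_{ij}:i\in[K]\}$. Then for every $i\in[N]$, the induced subgraph $G_{K,N}\big(U^o_i\cup\bigcup_{j\in[N]}B^o_j\big)$ is perfect.
   Context: A graph is perfect if in every induced subgraph the clique number equals the chromatic number. *)

theory Defs
  imports Main
begin

definition is_clique :: "('a \<Rightarrow> 'a \<Rightarrow> bool) \<Rightarrow> 'a set \<Rightarrow> bool" where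
  "is_clique E S \<longleftrightarrow> (\<forall>x\<in>S. \<forall>y\<in>S. x \<noteq> y \<longrightarrow> E x y)"

definition clique_number :: "'a set \<Rightarrow> ('a \<Rightarrow> 'a \<Rightarrow> bool) \<Rightarrow> nat" where
  "clique_number V E = Max {card S | S. S \<subseteq> V \<and> is_clique E S}"

definition proper_colouring :: "'a set \<Rightarrow> ('a \<Rightarrow> 'a \<Rightarrow> bool) \<Rightarrow> nat \<Rightarrow> ('a \<Rightarrow> nat) \<Rightarrow> bool" where
  "proper_colouring V E k f \<longleftrightarrow>
     (\<forall>x\<in>V. f x < k) \<and> (\<forall>x\<in>V. \<forall>y\<in>V. E x y \<longrightarrow> f x \<noteq> f y)"

definition chromatic_number :: "'a set \<Rightarrow> ('a \<Rightarrow> 'a \<Rightarrow> bool) \<Rightarrow> nat" where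
  "chromatic_number V E = (LEAST k. \<exists>f. proper_colouring V E k f)"

definition perfect :: "'a set \<Rightarrow> ('a \<Rightarrow> 'a \<Rightarrow> bool) \<Rightarrow> bool" where
  "perfect V E \<longleftrightarrow> finite V \<and> (\<forall>S\<subseteq>V. clique_number S E = chromatic_number S E)"

datatype vtx = U nat nat | B nat nat

definition GV :: "nat \<Rightarrow> nat \<Rightarrow> vtx set" where
  "GV K N = {U i j | i j. i \<in> {1..K} \<and> j \<in> {1..N}} \<union> {B i j | i j. i \<in> {1..K} \<and> j \<in> {1..N}}"

definition G_base :: "nat \<Rightarrow> nat \<Rightarrow> vtx \<Rightarrow> vtx \<Rightarrow> bool" where
  "G_base K N x y \<longleftrightarrow>
     (\<exists>i\<in>{1..K}. \<exists>j\<in>{1..N}. \<exists>k\<in>{1..N}. j \<noteq> k \<and> x = U i j \<and> y = U i k) \<or>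
     (\<exists>i\<in>{1..K}. \<exists>j\<in>{1..N}. \<exists>k\<in>{1..N}. x = B i j \<and> y = U i k) \<or>
     (\<exists>i\<in>{1..N}. \<exists>j\<in>{1..K}. \<exists>k\<in>{1..K}. j \<noteq> k \<and>
        ((x = U j i \<and> y = U k i) \<or> (x = B j i \<and> y = B k i) \<or> (x = B j i \<and> y = U k i)))"

definition G_adj :: "nat \<Rightarrow> nat \<Rightarrow> vtx \<Rightarrow> vtx \<Rightarrow> bool" where
  "G_adj K N x y \<longleftrightarrow> G_base K N x y \<or> G_base K N y x"

definition Uo :: "nat \<Rightarrow> nat \<Rightarrow> vtx set" where
  "Uo K j = {U i j | i. i \<in> {1..K}}"

definition Bo :: "nat \<Rightarrow> nat \<Rightarrow> vtx set" where
  "Bo K j = {B i j | i. i \<in> {1..K}}"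

end

theory Submission imports Defs begin

lemma mod_shift_inj:
  fixes x y s W :: nat
  assumes "x < W" "y < W" "(x + s) mod W = (y + s) mod W"
  shows "x = y"
proof -
  have "(int x + int s) mod int W = (int y + int s) mod int W"
    using assms(3) by (metis of_nat_add of_nat_mod)
  then have "((int x + int s) - int s) mod int W = ((int y + int s) - int s) mod int W"
    by (metis mod_diff_left_eq)
  then have "int x mod int W = int y mod int W" by simp
  thus ?thesis using assms(1,2) by simp
qed

lemma shift_lemma:
  fixes T u :: "'a set" and gu :: "'a \<Rightarrow> nat" and W :: nat
  assumes fT: "finite T" and fu: "finite u" and guinj: "inj_on gu u" and gu: "gu ` u \<subseteq> {0..<W}"
    and cT: "card T \<le> W" and two: "T \<inter> u \<noteq> {} \<Longrightarrow> 2 \<le> W"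
  shows "\<exists>g. inj_on g T \<and> g ` T \<subseteq> {0..<W} \<and> (\<forall>a\<in>T \<inter> u. g a \<noteq> gu a)"
proof (cases "card (T \<inter> u) < W")
  case True
  obtain h where h: "bij_betw h T {0..<card T}" using ex_bij_betw_finite_nat[OF fT] by blast
  have hinj: "inj_on h T" and hlt: "\<And>a. a \<in> T \<Longrightarrow> h a < W"
    using h cT by (auto simp: bij_betw_def) (metis atLeastLessThan_iff image_eqI order_less_le_trans)
  define Fs where "Fs = (\<Union>a\<in>T \<inter> u. {s. s < W \<and> (h a + s) mod W = gu a})"
  have one: "card {s. s < W \<and> (h a + s) mod W = gu a} \<le> 1" for a
  proof -
    have "\<forall>s1\<in>{s. s < W \<and> (h a + s) mod W = gu a}. \<forall>s2\<in>{s. s < W \<and> (h a + s) mod W = gu a}. s1 = s2"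
    proof (intro ballI)
      fix s1 s2 assume "s1 \<in> {s. s < W \<and> (h a + s) mod W = gu a}" "s2 \<in> {s. s < W \<and> (h a + s) mod W = gu a}"
      then have "s1 < W" "s2 < W" "(s1 + h a) mod W = (s2 + h a) mod W" by (auto simp: add.commute)
      thus "s1 = s2" using mod_shift_inj by blast
    qed
    thus ?thesis using card_le_Suc0_iff_eq by (metis (no_types, lifting) One_nat_def finite_nat_set_iff_bounded mem_Collect_eq)
  qed
  have "card Fs \<le> (\<Sum>a\<in>T \<inter> u. card {s. s < W \<and> (h a + s) mod W = gu a})"
    unfolding Fs_def using fT by (intro card_UN_le) auto
  also have "\<dots> \<le> (\<Sum>a\<in>T \<inter> u. 1)" by (intro sum_mono one)
  also have "\<dots> < W" using True by simp
  finally have "card Fs < card {0..<W}" by simp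
  then obtain s where s: "s \<in> {0..<W}" "s \<notin> Fs"
  proof -
    have "finite Fs" unfolding Fs_def using fT by auto
    then have "\<not> {0..<W} \<subseteq> Fs" using \<open>card Fs < card {0..<W}\<close> card_mono by (metis not_le)
    then show ?thesis using that by blast
  qed
  show ?thesis
  proof (intro exI conjI ballI)
    show "inj_on (\<lambda>a. (h a + s) mod W) T"
      by (rule inj_onI) (use hinj hlt mod_shift_inj in \<open>blast dest: inj_onD\<close>)
    show "(\<lambda>a. (h a + s) mod W) ` T \<subseteq> {0..<W}" using s by auto
    fix a assume "a \<in> T \<inter> u"
    then show "(h a + s) mod W \<noteq> gu a" using s unfolding Fs_def by auto
  qed
next
  case False
  have "T \<inter> u = T"
    using False cT fT by (metis Int_lower1 card_seteq le_trans not_le)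
  then have Tu: "T \<subseteq> u" by blast
  show ?thesis
  proof (cases "T = {}")
    case True thus ?thesis by auto
  next
    case False
    then have W2: "2 \<le> W" using two Tu by blast
    show ?thesis
    proof (intro exI conjI ballI)
      show "inj_on (\<lambda>a. (gu a + 1) mod W) T"
      proof (rule inj_onI)
        fix a b assume ab: "a \<in> T" "b \<in> T" "(gu a + 1) mod W = (gu b + 1) mod W"
        then have "gu a < W" "gu b < W" using Tu gu by (auto simp: subset_iff image_subset_iff)
        then have "gu a = gu b" using ab(3) mod_shift_inj by blast
        thus "a = b" using guinj Tu ab by (auto dest: inj_onD)
      qed
      show "(\<lambda>a. (gu a + 1) mod W) ` T \<subseteq> {0..<W}" using W2 by auto
      fix a assume a: "a \<in> T \<inter> u"
      then have "gu a < W" using gu by auto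
      then show "(gu a + 1) mod W \<noteq> gu a" using W2
      proof (cases "gu a + 1 < W")
        case True thus ?thesis by simp
      next
        case False
        then have "gu a + 1 = W" using \<open>gu a < W\<close> by simp
        then have "(gu a + 1) mod W = 0" by simp
        moreover have "gu a \<noteq> 0" using W2 \<open>gu a + 1 = W\<close> by simp
        ultimately show ?thesis by simp
      qed
    qed
  qed
qed


lemma clique_le_colours:
  assumes "proper_colouring S E k f" "C \<subseteq> S" "is_clique E C"
  shows "card C \<le> k"
proof -
  have "inj_on f C"
    using assms unfolding proper_colouring_def is_clique_def by (meson inj_onI subsetD)
  moreover have "f ` C \<subseteq> {0..<k}" using assms unfolding proper_colouring_def by auto
  ultimately have "card C \<le> card {0..<k}" by (intro card_inj_on_le) auto
  thus ?thesis by simp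
qed

lemma clique_set_finite:
  assumes "finite S"
  shows "finite {card C | C. C \<subseteq> S \<and> is_clique E C}"
proof -
  have "{card C | C. C \<subseteq> S \<and> is_clique E C} \<subseteq> card ` Pow S" by auto
  thus ?thesis using assms finite_subset by blast
qed

lemma clique_le_number:
  assumes "finite S" "C \<subseteq> S" "is_clique E C"
  shows "card C \<le> clique_number S E"
  unfolding clique_number_def using assms clique_set_finite[OF assms(1)]
  by (intro Max_ge) auto

lemma number_le_colours:
  assumes "finite S" "proper_colouring S E k f"
  shows "clique_number S E \<le> k"
proof -
  have ne: "{card C | C. C \<subseteq> S \<and> is_clique E C} \<noteq> {}"
    by (rule ccontr) (auto simp: is_clique_def)
  show ?thesis unfolding clique_number_def
    using clique_set_finite[OF assms(1)] ne clique_le_colours[OF assms(2)]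
    by (subst Max_le_iff) auto
qed

lemma perfect_sub:
  assumes "finite S" "proper_colouring S E (clique_number S E) f"
  shows "clique_number S E = chromatic_number S E"
proof -
  have ex: "\<exists>f. proper_colouring S E (clique_number S E) f" using assms by blast
  have le: "chromatic_number S E \<le> clique_number S E"
    unfolding chromatic_number_def by (rule Least_le) (rule ex)
  have "\<exists>f. proper_colouring S E (chromatic_number S E) f"
    unfolding chromatic_number_def by (rule LeastI) (rule ex)
  then obtain g where "proper_colouring S E (chromatic_number S E) g" by blast
  then have "clique_number S E \<le> chromatic_number S E" using number_le_colours assms(1) by blast
  with le show ?thesis by simp
qed

lemma adjUU: "G_adj K N (U a j) (U b l) \<longleftrightarrow> a\<in>{1..K} \<and> b\<in>{1..K} \<and> j\<in>{1..N} \<and> l\<in>{1..N} \<and> ((a=b \<and> j\<noteq>l) \<or> (j=l \<and> a\<noteq>b))"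
  unfolding G_adj_def G_base_def by auto
lemma adjBU: "G_adj K N (B a j) (U b l) \<longleftrightarrow> a\<in>{1..K} \<and> b\<in>{1..K} \<and> j\<in>{1..N} \<and> l\<in>{1..N} \<and> (a=b \<or> (j=l \<and> a\<noteq>b))"
  unfolding G_adj_def G_base_def by auto
lemma adjUB: "G_adj K N (U b l) (B a j) \<longleftrightarrow> a\<in>{1..K} \<and> b\<in>{1..K} \<and> j\<in>{1..N} \<and> l\<in>{1..N} \<and> (a=b \<or> (j=l \<and> a\<noteq>b))"
  unfolding G_adj_def G_base_def by auto
lemma adjBB: "G_adj K N (B a j) (B b l) \<longleftrightarrow> a\<in>{1..K} \<and> b\<in>{1..K} \<and> j\<in>{1..N} \<and> l\<in>{1..N} \<and> j=l \<and> a\<noteq>b"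
  unfolding G_adj_def G_base_def by auto


theorem lemma6:
  fixes K N i :: nat
  assumes "i \<in> {1..N}"
  shows "perfect (Uo K i \<union> (\<Union>j\<in>{1..N}. Bo K j)) (G_adj K N)"
proof -
  let ?V = "Uo K i \<union> (\<Union>j\<in>{1..N}. Bo K j)"
  let ?E = "G_adj K N"
  have Uo_eq: "Uo K j = (\<lambda>a. U a j) ` {1..K}" for j unfolding Uo_def by auto
  have Bo_eq: "Bo K j = (\<lambda>a. B a j) ` {1..K}" for j unfolding Bo_def by auto
  have finV: "finite ?V" unfolding Uo_eq Bo_eq by auto
  have memU: "U a j \<in> ?V \<longleftrightarrow> a \<in> {1..K} \<and> j = i" for a j unfolding Uo_eq Bo_eq by auto
  have memB: "B a j \<in> ?V \<longleftrightarrow> a \<in> {1..K} \<and> j \<in> {1..N}" for a j unfolding Uo_eq Bo_eq by (auto simp: image_iff)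
  have "\<forall>S\<subseteq>?V. clique_number S ?E = chromatic_number S ?E"
  proof (intro allI impI)
    fix S assume S: "S \<subseteq> ?V"
    have finS: "finite S" using S finV finite_subset by blast
    define k where "k = clique_number S ?E"
    define u where "u = {a. U a i \<in> S}"
    define T where "T = (\<lambda>c. {a. B a c \<in> S})"
    have uK: "u \<subseteq> {1..K}" using S memU unfolding u_def by blast
    have TK: "T c \<subseteq> {1..K}" for c using S memB unfolding T_def by blast
    have TN: "T c \<noteq> {} \<Longrightarrow> c \<in> {1..N}" for c using S memB unfolding T_def by blast
    have uK1: "a \<in> u \<Longrightarrow> Suc 0 \<le> a \<and> a \<le> K" for a using uK by auto
    have TK1: "a \<in> T c \<Longrightarrow> Suc 0 \<le> a \<and> a \<le> K" for a c using TK[of c] by auto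
    have Uin: "U a j \<in> S \<Longrightarrow> a \<in> u \<and> j = i" for a j
    proof -
      assume h: "U a j \<in> S"
      then have "U a j \<in> ?V" using S by blast
      then have "j = i" using memU by blast
      thus ?thesis using h unfolding u_def by simp
    qed
    have finu: "finite u" using uK finite_subset by blast
    have finT: "finite (T c)" for c using TK finite_subset by blast
    have clq: "card C \<le> k" if "C \<subseteq> S" "is_clique ?E C" for C
      unfolding k_def using clique_le_number[OF finS that] .
    have k0: "card u + card (T i) \<le> k"
    proof -
      let ?C = "(\<lambda>a. U a i) ` u \<union> (\<lambda>a. B a i) ` T i"
      have "?C \<subseteq> S" unfolding u_def T_def by auto
      moreover have "is_clique ?E ?C"
        unfolding is_clique_def using assms by (auto simp: adjUU adjBU adjUB adjBB dest: uK1 TK1)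
      ultimately have "card ?C \<le> k" by (rule clq)
      moreover have "card ?C = card u + card (T i)"
        by (subst card_Un_disjoint) (auto simp: finu finT card_image inj_on_def)
      ultimately show ?thesis by simp
    qed
    have kc: "card (T c) \<le> k" for c
    proof -
      let ?C = "(\<lambda>a. B a c) ` T c"
      have "?C \<subseteq> S" unfolding T_def by auto
      moreover have "is_clique ?E ?C"
      proof (cases "T c = {}")
        case True thus ?thesis by (simp add: is_clique_def)
      next
        case False
        then have "c \<in> {1..N}" by (rule TN)
        thus ?thesis unfolding is_clique_def by (auto simp: adjBB dest: TK1)
      qed
      ultimately have "card ?C \<le> k" by (rule clq)
      thus ?thesis by (simp add: card_image inj_on_def)
    qed
    have k2: "2 \<le> k" if ne: "T c \<inter> u \<noteq> {}" for c
    proof -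
      obtain a where a: "a \<in> T c" "a \<in> u" using ne by blast
      have c: "c \<in> {1..N}" using TN a(1) by blast
      let ?C = "{U a i, B a c}"
      have "?C \<subseteq> S" using a unfolding u_def T_def by auto
      moreover have "is_clique ?E ?C"
        unfolding is_clique_def using uK1[OF a(2)] TK1[OF a(1)] c assms by (auto simp: adjBU adjUB)
      ultimately have "card ?C \<le> k" by (rule clq)
      thus ?thesis by simp
    qed
    obtain gu where gu: "bij_betw gu u {0..<card u}" using ex_bij_betw_finite_nat[OF finu] by blast
    obtain gi where gi: "bij_betw gi (T i) {0..<card (T i)}" using ex_bij_betw_finite_nat[OF finT] by blast
    have guinj: "inj_on gu u" and gult: "\<And>a. a \<in> u \<Longrightarrow> gu a < card u"
      using gu by (auto simp: bij_betw_def)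
    have giinj: "inj_on gi (T i)" and gilt: "\<And>a. a \<in> T i \<Longrightarrow> gi a < card (T i)"
      using gi by (auto simp: bij_betw_def)
    have guk: "gu ` u \<subseteq> {0..<k}" using gult k0 by fastforce
    have "\<forall>c. \<exists>g. inj_on g (T c) \<and> g ` T c \<subseteq> {0..<k} \<and> (\<forall>a\<in>T c \<inter> u. g a \<noteq> gu a)"
      using shift_lemma[OF finT finu guinj guk kc k2] by blast
    then have "\<exists>gc. \<forall>c. inj_on (gc c) (T c) \<and> gc c ` T c \<subseteq> {0..<k} \<and> (\<forall>a\<in>T c \<inter> u. gc c a \<noteq> gu a)"
      by (rule choice)
    then obtain gc where gc0: "\<forall>c. inj_on (gc c) (T c) \<and> gc c ` T c \<subseteq> {0..<k} \<and> (\<forall>a\<in>T c \<inter> u. gc c a \<noteq> gu a)"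
      by blast
    have gc: "\<And>c. inj_on (gc c) (T c)" "\<And>c. gc c ` T c \<subseteq> {0..<k}"
       "\<And>c a. a \<in> T c \<Longrightarrow> a \<in> u \<Longrightarrow> gc c a \<noteq> gu a"
      using gc0 by blast+
    define f where "f = (\<lambda>x. case x of U a j \<Rightarrow> gu a | B a c \<Rightarrow> (if c = i then card u + gi a else gc c a))"
    have "proper_colouring S ?E k f"
      unfolding proper_colouring_def
    proof (intro conjI ballI impI)
      fix x assume x: "x \<in> S"
      show "f x < k"
      proof (cases x)
        case (U a j)
        then have "a \<in> u" using x Uin by blast
        thus ?thesis using U gult k0 unfolding f_def by fastforce
      next
        case (B a c)
        then have a: "a \<in> T c" using x unfolding T_def by blast
        show ?thesis
        proof (cases "c = i")
          case True thus ?thesis using B a gilt k0 unfolding f_def by fastforce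
        next
          case False thus ?thesis using B a gc(2) unfolding f_def by fastforce
        qed
      qed
    next
      fix x y assume x: "x \<in> S" and y: "y \<in> S" and e: "?E x y"
      show "f x \<noteq> f y"
      proof (cases x)
        case (U a j)
        then have a: "a \<in> u" "j = i" using x Uin by blast+
        show ?thesis
        proof (cases y)
          case (U b l)
          then have b: "b \<in> u" "l = i" using y Uin by blast+
          have "a \<noteq> b" using e a b \<open>x = U a j\<close> U by (auto simp: adjUU)
          thus ?thesis using guinj a b \<open>x = U a j\<close> U unfolding f_def by (auto dest: inj_onD)
        next
          case (B b c)
          then have b: "b \<in> T c" using y unfolding T_def by blast
          show ?thesis
          proof (cases "c = i")
            case True thus ?thesis using a B \<open>x = U a j\<close> gult unfolding f_def by fastforce
          next
            case False
            then have "a = b" using e \<open>x = U a j\<close> B a by (auto simp: adjUB)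
            thus ?thesis using gc(3)[OF b] a False B \<open>x = U a j\<close> unfolding f_def by auto
          qed
        qed
      next
        case (B a c)
        then have a: "a \<in> T c" using x unfolding T_def by blast
        show ?thesis
        proof (cases y)
          case (U b l)
          then have b: "b \<in> u" "l = i" using y Uin by blast+
          show ?thesis
          proof (cases "c = i")
            case True thus ?thesis using b B \<open>y = U b l\<close> gult unfolding f_def by fastforce
          next
            case False
            then have "a = b" using e \<open>y = U b l\<close> B b by (auto simp: adjBU)
            thus ?thesis using gc(3)[OF a] b False B \<open>y = U b l\<close> unfolding f_def by auto
          qed
        next
          case B': (B b d)
          then have b: "b \<in> T d" using y unfolding T_def by blast
          have cd: "c = d" "a \<noteq> b" using e B B' by (auto simp: adjBB)
          show ?thesis
          proof (cases "c = i")
            case True thus ?thesis using cd a b B B' giinj unfolding f_def by (auto dest: inj_onD)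
          next
            case False thus ?thesis using cd a b B B' gc(1)[of c] unfolding f_def by (auto dest: inj_onD)
          qed
        qed
      qed
    qed
    then show "clique_number S ?E = chromatic_number S ?E"
      using perfect_sub[OF finS] unfolding k_def by blast
  qed
  then show ?thesis unfolding perfect_def using finV by blast
qed

end
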